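(* Consider a Fragile multi-CPR Game $G^{(2)}$ with $n\ge1$ players and $m\ge1$ CPRs satisfying the Assumption below, with constraint policies $\vartheta_i$ as defined below, and assume $m\le n$. Let $\mathcal{N}(G^{(2)})\subset\mathcal{C}_n\subset\mathbb{R}^{nm}$ be the set of all Generalized Nash equilibria of $G^{(2)}$. Then the $(n\cdot m)$-dimensional Lebesgue measure of $\mathcal{N}(G^{(2)})$ is zero.
   Context: Let $[k]=\{1,\dots,k\}$. Let $C_m=\{(x_1,\dots,x_m)\in[0,1]^m:\sum_{j}x_j\le1\}$, $\mathcal{C}_n=\prod_{i\in[n]}C_m$, $\mathcal{C}_{-i}=\prod_{[n]\setminus\{i\}}C_m$. A strategy profile is $\mathbf{x}=(\mathbf{x}_1,\dots,\mathbf{x}_n)\in\mathcal{C}_n$, $\mathbf{x}_i=(x_{i1},\dots,x_{im})$; write $\mathbf{x}=(\mathbf{x}_i,\mathbf{x}_{-i})$. Put $\mathbf{x}_T^{(j)}=\sum_{i}x_{ij}$, $\mathbf{x}_T^{j|i}=\sum_{\ell\ne i}x_{\ell j}$. Each CPR $j$ has a return rate $\mathcal{R}_j(t)>1$ and failure probability $p_j(t)\in[0,1]$; each player $i$ has parameters $a_i,k_i$. Effective rate: $\mathcal{F}_{ij}(t)=(\mathcal{R}_j(t)-1)^{a_i}(1-p_j(t))-k_ip_j(t)$; utility: $\mathcal{V}_i(\mathbf{x}_i;\mathbf{x}_{-i})=\sum_j x_{ij}^{a_i}\mathcal{F}_{ij}(\mathbf{x}_T^{(j)})$. Assumption: (1)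 $p_j(0)=0$, $p_j(t)=1$ for $t\ge1$; (2) $a_i\in(0,1]$, $k_i>0$; (3) each $\mathcal{F}_{ij}$ (continuous on $[0,1]$) has strictly negative first and second derivatives on $(0,1)$. Let $\omega_{ij}\in(0,1)$ be the unique zero of $\mathcal{F}_{ij}$ in $(0,1)$. Active CPRs: $A(\mathbf{x}_{-i})=\{j:\mathbf{x}_T^{j|i}<\omega_{ij}\}$. Constraint policy: $\vartheta_i(\mathbf{x}_{-i})=C_m\cap\big(\prod_{j\in A(\mathbf{x}_{-i})}[0,\omega_{ij}-\mathbf{x}_T^{j|i}]\times\prod_{j\notin A(\mathbf{x}_{-i})}\{0\}\big)$. A Generalized Nash equilibrium is $\mathbf{x}^*\in\mathcal{C}_n$ with, for all $i$, $\mathbf{x}^*_i\in\vartheta_i(\mathbf{x}^*_{-i})$ and $\mathcal{V}_i(\mathbf{x}^*_i;\mathbf{x}^*_{-i})\ge\mathcal{V}_i(\mathbf{y};\mathbf{x}^*_{-i})$ for all $\mathbf{y}\in\vartheta_i(\mathbf{x}^*_{-i})$. *)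

theory Defs
  imports "HOL-Analysis.Analysis"
begin

text \<open>Players are indexed by a finite type 'n (n = CARD('n) >= 1), CPRs by a
finite type 'm (m = CARD('m) >= 1). A strategy profile is a point of
real^'m^'n, i.e. of R^(n m); x$i$j is the investment of player i in CPR j.\<close>

definition simplexC :: "(real^'m) set" where
  "simplexC = {v. (\<forall>j. 0 \<le> v$j \<and> v$j \<le> 1) \<and> (\<Sum>j\<in>UNIV. v$j) \<le> 1}"

definition profiles :: "(real^'m^'n) set" where
  "profiles = {x. \<forall>i. x$i \<in> simplexC}"

definition total :: "real^'m^'n \<Rightarrow> 'm \<Rightarrow> real" where
  "total x j = (\<Sum>i\<in>UNIV. x$i$j)"

definition total_except :: "real^'m^'n \<Rightarrow> 'n \<Rightarrow> 'm \<Rightarrow> real" where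
  "total_except x i j = (\<Sum>l\<in>UNIV - {i}. x$l$j)"

definition effrate ::
  "('m \<Rightarrow> real \<Rightarrow> real) \<Rightarrow> ('m \<Rightarrow> real \<Rightarrow> real) \<Rightarrow> ('n \<Rightarrow> real) \<Rightarrow> ('n \<Rightarrow> real)
   \<Rightarrow> 'n \<Rightarrow> 'm \<Rightarrow> real \<Rightarrow> real" where
  "effrate R p a k i j t = (R j t - 1) powr (a i) * (1 - p j t) - k i * p j t"

definition utility ::
  "('m \<Rightarrow> real \<Rightarrow> real) \<Rightarrow> ('m \<Rightarrow> real \<Rightarrow> real) \<Rightarrow> ('n \<Rightarrow> real) \<Rightarrow> ('n \<Rightarrow> real)
   \<Rightarrow> 'n \<Rightarrow> real^'m \<Rightarrow> real^'m^'n \<Rightarrow> real" where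
  "utility R p a k i y x =
     (\<Sum>j\<in>UNIV. (y$j) powr (a i) * effrate R p a k i j (y$j + total_except x i j))"

definition omega ::
  "('m \<Rightarrow> real \<Rightarrow> real) \<Rightarrow> ('m \<Rightarrow> real \<Rightarrow> real) \<Rightarrow> ('n \<Rightarrow> real) \<Rightarrow> ('n \<Rightarrow> real)
   \<Rightarrow> 'n \<Rightarrow> 'm \<Rightarrow> real" where
  "omega R p a k i j = (THE w. 0 < w \<and> w < 1 \<and> effrate R p a k i j w = 0)"

definition active ::
  "('m \<Rightarrow> real \<Rightarrow> real) \<Rightarrow> ('m \<Rightarrow> real \<Rightarrow> real) \<Rightarrow> ('n \<Rightarrow> real) \<Rightarrow> ('n \<Rightarrow> real)
   \<Rightarrow> 'n \<Rightarrow> real^'m^'n \<Rightarrow> 'm set" where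
  "active R p a k i x = {j. total_except x i j < omega R p a k i j}"

definition policy ::
  "('m \<Rightarrow> real \<Rightarrow> real) \<Rightarrow> ('m \<Rightarrow> real \<Rightarrow> real) \<Rightarrow> ('n \<Rightarrow> real) \<Rightarrow> ('n \<Rightarrow> real)
   \<Rightarrow> 'n \<Rightarrow> real^'m^'n \<Rightarrow> (real^'m) set" where
  "policy R p a k i x = simplexC \<inter>
     {y. \<forall>j. (j \<in> active R p a k i x \<longrightarrow>
                 0 \<le> y$j \<and> y$j \<le> omega R p a k i j - total_except x i j) \<and>
              (j \<notin> active R p a k i x \<longrightarrow> y$j = 0)}"

definition GNE ::
  "('m \<Rightarrow> real \<Rightarrow> real) \<Rightarrow> ('m \<Rightarrow> real \<Rightarrow> real) \<Rightarrow> ('n \<Rightarrow> real) \<Rightarrow> ('n \<Rightarrow> real)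
   \<Rightarrow> (real^'m^'n) set" where
  "GNE R p a k = {x \<in> profiles. \<forall>i. x$i \<in> policy R p a k i x \<and>
       (\<forall>y \<in> policy R p a k i x. utility R p a k i (x$i) x \<ge> utility R p a k i y x)}"

definition game_assumption ::
  "('m \<Rightarrow> real \<Rightarrow> real) \<Rightarrow> ('m \<Rightarrow> real \<Rightarrow> real) \<Rightarrow> ('n \<Rightarrow> real) \<Rightarrow> ('n \<Rightarrow> real) \<Rightarrow> bool" where
  "game_assumption R p a k \<longleftrightarrow>
     (\<forall>j. \<forall>t\<ge>0. R j t > 1 \<and> 0 \<le> p j t \<and> p j t \<le> 1) \<and>
     (\<forall>j. p j 0 = 0 \<and> (\<forall>t\<ge>1. p j t = 1)) \<and>
     (\<forall>i. 0 < a i \<and> a i \<le> 1 \<and> 0 < k i) \<and>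
     (\<forall>i j. continuous_on {0..1} (effrate R p a k i j) \<and>
        (\<exists>F1 F2. \<forall>t\<in>{0<..<1}.
            (effrate R p a k i j has_real_derivative F1 t) (at t) \<and> F1 t < 0 \<and>
            (F1 has_real_derivative F2 t) (at t) \<and> F2 t < 0))"

end

theory Submission
  imports Defs
begin

lemma GA_deriv:
  assumes "game_assumption R p a k"
  shows "\<exists>F1 F2. \<forall>t\<in>{0<..<1}.
            (effrate R p a k i j has_real_derivative F1 t) (at t) \<and> F1 t < 0 \<and>
            (F1 has_real_derivative F2 t) (at t) \<and> F2 t < 0"
  using assms unfolding game_assumption_def by blast

lemma omega_props:
  assumes GA: "game_assumption R p a k"
  shows "0 < omega R p a k i j \<and> omega R p a k i j < 1 \<and> effrate R p a k i j (omega R p a k i j) = 0"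
proof -
  let ?F = "effrate R p a k i j"
  have cont: "continuous_on {0..1} ?F" using GA unfolding game_assumption_def by blast
  obtain F1 F2 where D: "\<forall>t\<in>{0<..<1}.
            (?F has_real_derivative F1 t) (at t) \<and> F1 t < 0 \<and>
            (F1 has_real_derivative F2 t) (at t) \<and> F2 t < 0"
    using GA_deriv[OF GA] by blast
  have R0: "R j 0 > 1" and p0: "p j 0 = 0" and p1: "p j 1 = 1" and ai: "0 < a i" and ki: "0 < k i"
    using GA unfolding game_assumption_def by auto
  have F0: "?F 0 > 0" using R0 p0 by (simp add: effrate_def)
  have F1': "?F 1 < 0" using p1 ki by (simp add: effrate_def)
  obtain w where w: "0 \<le> w" "w \<le> 1" "?F w = 0"
    using IVT2'[of ?F 1 0 0] cont F0 F1' by force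
  have w01: "0 < w" "w < 1" using w F0 F1' by (auto simp: less_le)
  have uniq: "v = w" if "0 < v" "v < 1" "?F v = 0" for v
  proof (rule ccontr)
    assume "v \<noteq> w"
    then consider "v < w" | "w < v" by linarith
    then show False
    proof cases
      case 1
      have "?F w < ?F v"
      proof (rule DERIV_neg_imp_decreasing[OF 1])
        fix x assume "v \<le> x" "x \<le> w"
        then have "x \<in> {0<..<1}" using that w01 by auto
        then show "\<exists>y. (?F has_real_derivative y) (at x) \<and> y < 0" using D by blast
      qed
      then show False using that w by simp
    next
      case 2
      have "?F v < ?F w"
      proof (rule DERIV_neg_imp_decreasing[OF 2])
        fix x assume "w \<le> x" "x \<le> v"
        then have "x \<in> {0<..<1}" using that w01 by auto
        then show "\<exists>y. (?F has_real_derivative y) (at x) \<and> y < 0" using D by blast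
      qed
      then show False using that w by simp
    qed
  qed
  have "omega R p a k i j = w"
    unfolding omega_def
  proof (rule the_equality)
    show "0 < w \<and> w < 1 \<and> ?F w = 0" using w01 w by simp
    fix v assume "0 < v \<and> v < 1 \<and> ?F v = 0" then show "v = w" using uniq by blast
  qed
  then show ?thesis using w w01 by simp
qed

lemma total_split: "total x j = x$i$j + total_except x i j"
  unfolding total_def total_except_def
  by (simp add: sum.remove[of UNIV i])

lemma GNE_point:
  fixes x :: "real^'m::finite^'n::finite"
  assumes GA: "game_assumption R p a k" and x: "x \<in> GNE R p a k"
    and D: "\<forall>t\<in>{0<..<1}. (effrate R p a k i j has_real_derivative F1 t) (at t)"
  shows "x$i$j = 0 \<or> total x j = omega R p a k i j \<or> (\<Sum>j'\<in>UNIV. x$i$j') = 1 \<or>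
    (0 < x$i$j \<and> 0 < total x j \<and> total x j < 1 \<and>
      a i * effrate R p a k i j (total x j) + x$i$j * F1 (total x j) = 0)"
proof -
  let ?s = "total_except x i j"
  let ?w = "omega R p a k i j"
  let ?F = "effrate R p a k i j"
  let ?P = "policy R p a k i x"
  have prof: "\<And>i' j'. 0 \<le> x$i'$j' \<and> x$i'$j' \<le> 1" and sumx: "(\<Sum>j'\<in>UNIV. x$i$j') \<le> 1"
    using x unfolding GNE_def profiles_def simplexC_def by auto
  have s0: "?s \<ge> 0" unfolding total_except_def using prof by (simp add: sum_nonneg)
  have tot: "total x j = x$i$j + ?s" by (rule total_split)
  have pol: "x$i \<in> ?P" and opt: "\<And>y. y \<in> ?P \<Longrightarrow> utility R p a k i y x \<le> utility R p a k i (x$i) x"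
    using x unfolding GNE_def by auto
  have om: "0 < ?w" "?w < 1" using omega_props[OF GA] by auto
  have ai: "0 < a i" using GA unfolding game_assumption_def by auto
  show ?thesis
  proof (rule ccontr)
    assume H: "\<not> ?thesis"
    then have nz: "x$i$j \<noteq> 0" and nw: "total x j \<noteq> ?w" and n1: "(\<Sum>j'\<in>UNIV. x$i$j') \<noteq> 1"
      by auto
    have act: "j \<in> active R p a k i x"
      using pol nz unfolding policy_def by auto
    have le: "x$i$j \<le> ?w - ?s" using pol act unfolding policy_def by auto
    have lt: "x$i$j < ?w - ?s" using le nw tot by auto
    have pos: "0 < x$i$j" using prof[of i j] nz by auto
    have slt: "(\<Sum>j'\<in>UNIV. x$i$j') < 1" using sumx n1 by auto
    define d where "d = min (x$i$j) (min (?w - ?s - x$i$j) (1 - (\<Sum>j'\<in>UNIV. x$i$j')))"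
    have d0: "0 < d" unfolding d_def using pos lt slt by auto
    define y where "y u = x$i + (u - x$i$j) *\<^sub>R axis j 1" for u
    have yj: "y u $ j' = (if j' = j then u else x$i$j')" for u j'
      unfolding y_def by (simp add: axis_def)
    have ysum: "(\<Sum>j'\<in>UNIV. y u $ j') = (\<Sum>j'\<in>UNIV. x$i$j') + (u - x$i$j)" for u
    proof -
      have "(\<Sum>j'\<in>UNIV. y u $ j') = (\<Sum>j'\<in>UNIV. x$i$j' + (if j' = j then u - x$i$j else 0))"
        by (rule sum.cong) (auto simp: yj)
      also have "\<dots> = (\<Sum>j'\<in>UNIV. x$i$j') + (u - x$i$j)"
        by (simp add: sum.distrib)
      finally show ?thesis .
    qed
    define g where "g u = u powr a i * ?F (u + ?s)" for u
    define C where "C = (\<Sum>j'\<in>UNIV - {j}. (x$i$j') powr (a i) * effrate R p a k i j' (x$i$j' + total_except x i j'))"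
    have util: "utility R p a k i (y u) x = C + g u" for u
    proof -
      have "utility R p a k i (y u) x = g u + (\<Sum>j'\<in>UNIV - {j}. (y u $ j') powr (a i) * effrate R p a k i j' (y u $ j' + total_except x i j'))"
        unfolding utility_def g_def by (simp add: sum.remove[of UNIV j] yj)
      also have "(\<Sum>j'\<in>UNIV - {j}. (y u $ j') powr (a i) * effrate R p a k i j' (y u $ j' + total_except x i j')) = C"
        unfolding C_def by (rule sum.cong) (auto simp: yj)
      finally show ?thesis by simp
    qed
    have yx: "y (x$i$j) = x$i" unfolding y_def by simp
    have loc: "\<forall>u. \<bar>x$i$j - u\<bar> < d \<longrightarrow> g u \<le> g (x$i$j)"
    proof (intro allI impI)
      fix u assume u: "\<bar>x$i$j - u\<bar> < d"
      have u0: "0 < u" and uw: "u < ?w - ?s" and us: "(\<Sum>j'\<in>UNIV. x$i$j') + (u - x$i$j) < 1"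
        using u unfolding d_def by auto
      have "y u \<in> ?P"
        unfolding policy_def simplexC_def
      proof (intro IntI CollectI conjI allI impI)
        fix j'
        show "0 \<le> y u $ j'" using u0 prof by (simp add: yj)
        show "y u $ j' \<le> 1" using uw s0 om prof by (simp add: yj)
      next
        show "(\<Sum>j'\<in>UNIV. y u $ j') \<le> 1" using ysum us by simp
      next
        fix j' assume "j' \<in> active R p a k i x"
        then show "0 \<le> y u $ j'" "y u $ j' \<le> omega R p a k i j' - total_except x i j'"
          using pol u0 uw unfolding policy_def by (auto simp: yj)
      next
        fix j' assume "j' \<notin> active R p a k i x"
        then show "y u $ j' = 0"
          using pol act unfolding policy_def by (auto simp: yj)
      qed
      from opt[OF this] show "g u \<le> g (x$i$j)" using util[of u] util[of "x$i$j"] yx by simp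
    qed
    let ?T = "x$i$j + ?s"
    have T01: "?T \<in> {0<..<1}" using pos s0 lt om by auto
    have dpow: "((\<lambda>u. u powr a i) has_real_derivative a i * (x$i$j) powr (a i - 1)) (at (x$i$j))"
      by (rule has_real_derivative_powr[OF pos])
    have dF: "((\<lambda>u. ?F (u + ?s)) has_real_derivative F1 ?T) (at (x$i$j))"
    proof -
      have "((\<lambda>u. u + ?s) has_real_derivative 1) (at (x$i$j))"
        by (auto intro!: derivative_eq_intros)
      from DERIV_chain2[OF D[rule_format, OF T01] this] show ?thesis by simp
    qed
    have dg: "(g has_real_derivative (a i * (x$i$j) powr (a i - 1) * ?F ?T + F1 ?T * (x$i$j) powr a i)) (at (x$i$j))"
      unfolding g_def using DERIV_mult[OF dpow dF] by simp
    have z: "a i * (x$i$j) powr (a i - 1) * ?F ?T + F1 ?T * (x$i$j) powr a i = 0"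
      by (rule DERIV_local_max[OF dg d0 loc])
    have pe: "(x$i$j) powr (a i - 1) = (x$i$j) powr a i / x$i$j"
      using pos by (simp add: powr_diff)
    have pp: "(x$i$j) powr a i > 0" using pos by simp
    have "(x$i$j) powr a i * (a i * ?F ?T + x$i$j * F1 ?T) = 0"
      using z pos unfolding pe by (simp add: field_simps)
    then have "a i * ?F ?T + x$i$j * F1 ?T = 0" using pp by simp
    then show False using H pos T01 tot by auto
  qed
qed

lemma axis_sum: "(\<Sum>ia\<in>UNIV. axis j (1::real) $ ia * v $ ia) = v $ j"
proof -
  have "(\<Sum>ia\<in>UNIV. axis j (1::real) $ ia * v $ ia) = (\<Sum>ia\<in>UNIV. if ia = j then v $ ia else 0)"
    by (rule sum.cong) (auto simp: axis_def)
  then show ?thesis by simp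
qed

lemma Eij_inner: "axis i (axis j 1) \<bullet> (z::real^'m::finite^'n::finite) = z$i$j"
proof -
  have "axis i (axis j 1) \<bullet> z = z \<bullet> axis i (axis j 1)" by (rule inner_commute)
  also have "\<dots> = z$i \<bullet> axis j 1" by (rule inner_axis)
  also have "\<dots> = z$i$j \<bullet> 1" by (rule inner_axis)
  finally show ?thesis by simp
qed

lemma neg_coord: "negligible {z::real^'m::finite^'n::finite. z$i$j = c}"
proof -
  have "negligible {z::real^'m^'n. axis i (axis j 1) \<bullet> z = c}"
    by (rule negligible_hyperplane) (simp add: axis_eq_0_iff)
  then show ?thesis by (simp add: Eij_inner)
qed

lemma neg_total: "negligible {z::real^'m::finite^'n::finite. total z j = c}"
proof -
  have ne: "((\<chi> l. axis j (1::real)) :: real^'m^'n) \<noteq> 0"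
    by (simp add: vec_eq_iff axis_def)
  have "negligible {z::real^'m^'n. ((\<chi> l. axis j (1::real)) :: real^'m^'n) \<bullet> z = c}"
    by (rule negligible_hyperplane) (use ne in simp)
  moreover have "((\<chi> l. axis j (1::real)) :: real^'m^'n) \<bullet> z = total z j" for z :: "real^'m^'n"
    unfolding total_def inner_vec_def by (simp add: axis_sum)
  ultimately show ?thesis by simp
qed

lemma neg_rowsum: "negligible {z::real^'m::finite^'n::finite. (\<Sum>j'\<in>UNIV. z$i$j') = c}"
proof -
  have ne: "(axis i (\<chi> j'. (1::real)) :: real^'m^'n) \<noteq> 0"
  proof
    assume "(axis i (\<chi> j'. (1::real)) :: real^'m^'n) = 0"
    then have "(axis i (\<chi> j'. (1::real)) :: real^'m^'n) $ i $ undefined = 0" by simp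
    then show False by (simp add: axis_def)
  qed
  have "negligible {z::real^'m^'n. (axis i (\<chi> j'. (1::real)) :: real^'m^'n) \<bullet> z = c}"
    by (rule negligible_hyperplane) (use ne in simp)
  moreover have "(axis i (\<chi> j'. (1::real)) :: real^'m^'n) \<bullet> z = (\<Sum>j'\<in>UNIV. z$i$j')" for z :: "real^'m^'n"
  proof -
    have "(axis i (\<chi> j'. (1::real)) :: real^'m^'n) \<bullet> z = z \<bullet> axis i (\<chi> j'. (1::real))" by (rule inner_commute)
    also have "\<dots> = z$i \<bullet> (\<chi> j'. (1::real))" by (rule inner_axis)
    finally show ?thesis by (simp add: inner_vec_def)
  qed
  ultimately show ?thesis by simp
qed

lemma vec_axis2: "(axis i (axis j (1::real)) :: real^'m::finite^'n::finite) $ i' $ j' = (if i' = i \<and> j' = j then 1 else 0)"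
  by (simp add: axis_def)

lemma neg_R_multi:
  fixes F F1 F2 :: "real \<Rightarrow> real" and c :: real and i l :: "'n::finite" and j :: "'m::finite"
  assumes il: "i \<noteq> l"
  and D: "\<forall>t\<in>{0<..<1}. (F has_real_derivative F1 t) (at t) \<and> F1 t < 0 \<and> (F1 has_real_derivative F2 t) (at t)"
  shows "negligible {x::real^'m^'n. 0 < total x j \<and> total x j < 1 \<and> c * F (total x j) + x$i$j * F1 (total x j) = 0}"
proof -
  define \<phi> where "\<phi> t = - c * F t / F1 t" for t
  have d\<phi>: "\<phi> differentiable (at t)" if "t \<in> {0<..<1}" for t
  proof -
    from D that have dF: "(F has_real_derivative F1 t) (at t)" and dF1: "(F1 has_real_derivative F2 t) (at t)"
      and ng: "F1 t < 0" by blast+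
    from ng have nz: "F1 t \<noteq> 0" by simp
    have "((\<lambda>y. (- c) * F y / F1 y) has_real_derivative (((- c) * F1 t) * F1 t - F2 t * ((- c) * F t)) / F1 t ^ Suc (Suc 0)) (at t)"
      by (rule DERIV_quotient[OF DERIV_cmult[OF dF] dF1 nz])
    then have "(\<phi> has_real_derivative (((- c) * F1 t) * F1 t - F2 t * ((- c) * F t)) / F1 t ^ Suc (Suc 0)) (at t)"
      by (simp add: \<phi>_def[abs_def])
    then show ?thesis by (rule differentiableI[OF has_field_derivative_imp_has_derivative])
  qed
  define Eij :: "real^'m^'n" where "Eij = axis i (axis j 1)"
  define Elj :: "real^'m^'n" where "Elj = axis l (axis j 1)"
  define \<sigma> where "\<sigma> z = (\<Sum>l'\<in>UNIV - {i, l}. (z::real^'m^'n) $ l' $ j)" for z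
  define f where "f z = z + \<phi> (z$l$j) *\<^sub>R (Eij - Elj) - \<sigma> z *\<^sub>R Elj" for z
  define S where "S = {z::real^'m^'n. z$i$j = 0 \<and> 0 < z$l$j \<and> z$l$j < 1}"
  have negS: "negligible S"
    by (rule negligible_subset[OF neg_coord[of i j 0]]) (auto simp: S_def)
  have diff: "f differentiable_on S"
  proof (rule differentiable_at_imp_differentiable_on)
    fix z assume "z \<in> S"
    then have t: "z$l$j \<in> {0<..<1}" by (auto simp: S_def)
    have lin: "(\<lambda>z::real^'m^'n. z$l$j) differentiable at z"
      by (rule bounded_linear_imp_differentiable)
         (intro bounded_linear_compose[OF bounded_linear_vec_nth] bounded_linear_vec_nth)
    have c1: "(\<lambda>z::real^'m^'n. \<phi> (z$l$j)) differentiable at z"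
      using differentiable_compose[OF d\<phi>[OF t] lin] .
    have c2: "\<sigma> differentiable at z"
      unfolding \<sigma>_def
      by (intro differentiable_sum ballI finite_Diff finite bounded_linear_imp_differentiable
           bounded_linear_compose[OF bounded_linear_vec_nth] bounded_linear_vec_nth)
    show "f differentiable at z"
      unfolding f_def
      by (intro differentiable_add differentiable_diff differentiable_scaleR differentiable_ident
          differentiable_const c1 c2)
  qed
  have "{x::real^'m^'n. 0 < total x j \<and> total x j < 1 \<and> c * F (total x j) + x$i$j * F1 (total x j) = 0} \<subseteq> f ` S"
  proof
    fix x :: "real^'m^'n"
    assume "x \<in> {x. 0 < total x j \<and> total x j < 1 \<and> c * F (total x j) + x$i$j * F1 (total x j) = 0}"
    then have T: "0 < total x j" "total x j < 1" and eq: "c * F (total x j) + x$i$j * F1 (total x j) = 0" by auto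
    let ?T = "total x j"
    have nz: "F1 ?T \<noteq> 0" using D T by force
    have phiT: "\<phi> ?T = x$i$j" unfolding \<phi>_def using eq nz by (simp add: field_simps)
    have Tsplit: "?T = x$i$j + x$l$j + \<sigma> x"
    proof -
      have "?T = x$i$j + (\<Sum>l'\<in>UNIV - {i}. x$l'$j)"
        unfolding total_def by (simp add: sum.remove[of UNIV i])
      also have "(\<Sum>l'\<in>UNIV - {i}. x$l'$j) = x$l$j + (\<Sum>l'\<in>UNIV - {i} - {l}. x$l'$j)"
        using il by (subst sum.remove[of _ l]) auto
      also have "UNIV - {i} - {l} = UNIV - {i, l}" by auto
      finally show ?thesis unfolding \<sigma>_def by simp
    qed
    define z where "z = x + (?T - x$l$j) *\<^sub>R Elj - x$i$j *\<^sub>R Eij"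
    have zc: "z $ a' $ b' = (if a' = i \<and> b' = j then 0 else if a' = l \<and> b' = j then ?T else x $ a' $ b')" for a' b'
      unfolding z_def Eij_def Elj_def using il by (auto simp: vec_axis2)
    have sz: "\<sigma> z = \<sigma> x" unfolding \<sigma>_def by (rule sum.cong) (auto simp: zc)
    have "z \<in> S" unfolding S_def using T il by (simp add: zc)
    moreover have "f z = x"
    proof (simp add: vec_eq_iff, intro allI)
      fix a' b'
      show "f z $ a' $ b' = x $ a' $ b'"
        unfolding f_def Eij_def Elj_def using il Tsplit phiT
        by (auto simp: vec_axis2 zc sz)
    qed
    ultimately show "x \<in> f ` S" by (metis image_eqI)
  qed
  moreover have "negligible (f ` S)"
    by (rule negligible_differentiable_image_negligible[OF order_refl negS diff])
  ultimately show ?thesis by (rule negligible_subset[rotated])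
qed

lemma neg_R_single:
  fixes F F1 F2 :: "real \<Rightarrow> real" and c :: real and i :: "'n::finite" and j :: "'m::finite"
  assumes one: "\<forall>l::'n. l = i" and c: "0 < c"
  and D: "\<forall>t\<in>{0<..<1}. (F has_real_derivative F1 t) (at t) \<and> F1 t < 0 \<and> (F1 has_real_derivative F2 t) (at t) \<and> F2 t < 0"
  shows "negligible {x::real^'m^'n. 0 < total x j \<and> total x j < 1 \<and> c * F (total x j) + x$i$j * F1 (total x j) = 0}"
proof -
  have U: "(UNIV::'n set) = {i}" using one by auto
  have tot: "total x j = x$i$j" for x :: "real^'m^'n" unfolding total_def U by simp
  define K where "K t = c * F t + t * F1 t" for t
  have dec: "K t2 < K t1" if "0 < t1" "t1 < t2" "t2 < 1" for t1 t2
  proof (rule DERIV_neg_imp_decreasing[OF that(2)])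
    fix t assume "t1 \<le> t" "t \<le> t2"
    then have t: "t \<in> {0<..<1}" using that by auto
    with D have dF: "(F has_real_derivative F1 t) (at t)" and dF1: "(F1 has_real_derivative F2 t) (at t)"
      and n1: "F1 t < 0" and n2: "F2 t < 0" by blast+
    have "(K has_real_derivative c * F1 t + (1 * F1 t + F2 t * t)) (at t)"
      unfolding K_def[abs_def]
      by (intro DERIV_add DERIV_cmult DERIV_mult DERIV_ident dF dF1)
    moreover have "c * F1 t + (1 * F1 t + F2 t * t) < 0"
    proof -
      have "c * F1 t < 0" using c n1 by (simp add: mult_pos_neg)
      moreover have "F2 t * t < 0" using t n2 by (simp add: mult_neg_pos)
      ultimately show ?thesis using n1 by simp
    qed
    ultimately show "\<exists>y. (K has_real_derivative y) (at t) \<and> y < 0" by blast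
  qed
  define Z where "Z = {t. 0 < t \<and> t < 1 \<and> K t = 0}"
  have sub: "{x::real^'m^'n. 0 < total x j \<and> total x j < 1 \<and> c * F (total x j) + x$i$j * F1 (total x j) = 0}
      \<subseteq> {x. x$i$j \<in> Z}"
    unfolding Z_def K_def by (auto simp: tot)
  show ?thesis
  proof (cases "Z = {}")
    case True
    show ?thesis by (rule negligible_subset[OF negligible_empty]) (use sub True in auto)
  next
    case False
    then obtain t0 where t0: "t0 \<in> Z" by blast
    have "t = t0" if "t \<in> Z" for t
    proof (rule ccontr)
      assume "t \<noteq> t0"
      then consider "t < t0" | "t0 < t" by linarith
      then show False
        by cases (use dec[of t t0] dec[of t0 t] that t0 in \<open>auto simp: Z_def\<close>)
    qed
    then have "{x::real^'m^'n. x$i$j \<in> Z} \<subseteq> {x. x$i$j = t0}" by auto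
    then show ?thesis using sub neg_coord[of i j t0] by (meson negligible_subset order_trans)
  qed
qed

theorem theorem4:
  fixes R p :: "'m::finite \<Rightarrow> real \<Rightarrow> real"
    and a k :: "'n::finite \<Rightarrow> real"
  assumes "game_assumption R p a k"
    and "CARD('m) \<le> CARD('n)"
  shows "(GNE R p a k :: (real^'m^'n) set) \<in> null_sets lebesgue"
proof -
  note GA = assms(1)
  define i :: 'n where "i = undefined"
  define j :: 'm where "j = undefined"
  obtain F1 F2 where D: "\<forall>t\<in>{0<..<1}.
            (effrate R p a k i j has_real_derivative F1 t) (at t) \<and> F1 t < 0 \<and>
            (F1 has_real_derivative F2 t) (at t) \<and> F2 t < 0"
    using GA_deriv[OF GA] by blast
  have ai: "0 < a i" using GA unfolding game_assumption_def by auto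
  let ?Rs = "{x::real^'m^'n. 0 < total x j \<and> total x j < 1 \<and>
      a i * effrate R p a k i j (total x j) + x$i$j * F1 (total x j) = 0}"
  have negR: "negligible ?Rs"
  proof (cases "\<exists>l. l \<noteq> i")
    case True
    then obtain l where "i \<noteq> l" by metis
    moreover have "\<forall>t\<in>{0<..<1}. (effrate R p a k i j has_real_derivative F1 t) (at t) \<and> F1 t < 0 \<and> (F1 has_real_derivative F2 t) (at t)"
      using D by blast
    ultimately show ?thesis by (rule neg_R_multi)
  next
    case False
    then have "\<forall>l::'n. l = i" by blast
    from neg_R_single[OF this ai D] show ?thesis .
  qed
  have "GNE R p a k \<subseteq> {x::real^'m^'n. x$i$j = 0} \<union> {x. total x j = omega R p a k i j}
     \<union> {x. (\<Sum>j'\<in>UNIV. x$i$j') = 1} \<union> ?Rs"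
  proof
    fix x :: "real^'m^'n" assume "x \<in> GNE R p a k"
    from GNE_point[OF GA this, of i j F1] D show "x \<in> {x::real^'m^'n. x$i$j = 0} \<union> {x. total x j = omega R p a k i j}
     \<union> {x. (\<Sum>j'\<in>UNIV. x$i$j') = 1} \<union> ?Rs" by auto
  qed
  moreover have "negligible ({x::real^'m^'n. x$i$j = 0} \<union> {x. total x j = omega R p a k i j}
     \<union> {x. (\<Sum>j'\<in>UNIV. x$i$j') = 1} \<union> ?Rs)"
    using neg_coord[of i j 0] neg_total[of j "omega R p a k i j"] neg_rowsum[of i 1] negR by simp
  ultimately have "negligible (GNE R p a k :: (real^'m^'n) set)" by (rule negligible_subset[rotated])
  then show ?thesis by (simp add: negligible_iff_null_sets)
qed

end
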